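(* Let $n\ge 2$, let $q\in\{2,\dots,n\}$ and let $r_1,\dots,r_q\in\mathbb{N}$. Let $X\in\mathcal{H}_{0,r_1,\dots,r_q}$ satisfy $$B_1B_2\cdots B_q X=0 .$$ Then $X=0$.
   Context: Fix $n\ge 1$ and $s\ge 1$. For integers $k,l_1,\dots,l_s$, let $\mathcal{H}_{k,l_1,\dots,l_s}$ denote the real vector space of arrays $X^{J_1,\dots,J_s}_{i_1\dots i_k}$, where all indices range over $\{1,\dots,n\}$, each $J_\alpha=(j^{\alpha}_1,\dots,j^{\alpha}_{l_\alpha})$ is a string of $l_\alpha$ indices, the array is totally antisymmetric in $i_1,\dots,i_k$ and totally symmetric in the indices of each $J_\alpha$ separately. By convention $\mathcal{H}_{k,l_1,\dots,l_s}=0$ if some index $k,l_1,\dots,l_s$ is negative or if $k>n$. (Equivalently, $\mathcal{H}_{k,l_1,\dots,l_s}$ is the subspace of $\mathcal{F}^{-}(\mathbb{R}^n)\otimes\mathcal{F}^{+}(\mathbb{R}^n)^{\otimes s}$ with $k$ fermions and $l_\alpha$ bosons of type $\alpha$.) Denote by $\mathcal{S}^{+}_{a_1,\dots,a_p}$ (resp. $\mathcal{S}^{-}_{a_1,\dots,a_p}$) the symmetrization (resp. antisymmetrization) in the listed indices, normalized by $1/p!$. For $\alpha=1,\dots,s$ the operator $B_\alpha:\mathcal{H}_{k,l_1,\dots,l_s}\to\mathcal{H}_{k+1,l_1,\dots,l_\alpha+1,\dots,l_s}$ (in Fock language $B_\alpha=\sum_i b^{*}_{(\alpha)i}a^{*i}$)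 is defined by $$(B_\alpha X)^{J_1,\dots,J_{\alpha-1},\{j_0,j_1,\dots,j_l\},J_{\alpha+1},\dots,J_s}_{i_0i_1\dots i_k}=\mathcal{S}^{+}_{j_0,\dots,j_l}\,\mathcal{S}^{-}_{i_0,\dots,i_k}\,\delta^{j_0}_{i_0}\,X^{J_1,\dots,J_{\alpha-1},\{j_1,\dots,j_l\},J_{\alpha+1},\dots,J_s}_{i_1\dots i_k},$$ where $l=l_\alpha$ (the result is $0$ if $k+1>n$). *)

theory Defs
  imports Complex_Main "HOL-Combinatorics.Permutations"
begin

text \<open>An array X^{J_1..J_s}_{i_1..i_k} is modelled as a function of the list of
  fermion (lower) indices and the list of the s boson index strings J_1..J_s.
  Indices range over {1..n}; the function is required to vanish on arguments of the
  wrong shape, so that elements of H_{k,l_1..l_s} correspond exactly to such arrays.\<close>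

type_synonym arr = "nat list \<Rightarrow> nat list list \<Rightarrow> real"

definition valid_shape :: "nat \<Rightarrow> nat \<Rightarrow> nat list \<Rightarrow> nat list \<Rightarrow> nat list list \<Rightarrow> bool" where
  "valid_shape n k ls I Js \<longleftrightarrow>
     length I = k \<and> set I \<subseteq> {1..n} \<and> length Js = length ls \<and>
     (\<forall>a<length ls. length (Js ! a) = ls ! a \<and> set (Js ! a) \<subseteq> {1..n})"

definition inH :: "nat \<Rightarrow> nat \<Rightarrow> nat list \<Rightarrow> arr \<Rightarrow> bool" where
  "inH n k ls X \<longleftrightarrow>
     (\<forall>I Js. \<not> valid_shape n k ls I Js \<longrightarrow> X I Js = 0) \<and>
     (k > n \<longrightarrow> X = (\<lambda>_ _. 0)) \<and>
     (\<forall>I Js p. p permutes {..<length I} \<longrightarrow>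
         X (permute_list p I) Js = of_int (sign p) * X I Js) \<and>
     (\<forall>I Js a p. a < length Js \<longrightarrow> p permutes {..<length (Js ! a)} \<longrightarrow>
         X I (Js[a := permute_list p (Js ! a)]) = X I Js)"

text \<open>The operator B_alpha (here alpha is 0-based: B n a corresponds to B_{a+1}):
  (B X)^{..,{j_0..j_l},..}_{i_0..i_k} =
     S^+_{j_0..j_l} S^-_{i_0..i_k} delta^{j_0}_{i_0} X^{..,{j_1..j_l},..}_{i_1..i_k},
  each (anti)symmetrizer normalized by 1/p!; the result is 0 if k+1 > n.\<close>
definition B :: "nat \<Rightarrow> nat \<Rightarrow> arr \<Rightarrow> arr" where
  "B n a X = (\<lambda>I Js.
     if I \<noteq> [] \<and> length I \<le> n \<and> set I \<subseteq> {1..n} \<and> a < length Js \<and> Js ! a \<noteq> [] \<and>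
        (\<forall>b<length Js. set (Js ! b) \<subseteq> {1..n})
     then (1 / fact (length (Js ! a))) * (1 / fact (length I)) *
       (\<Sum>\<sigma>\<in>{\<sigma>. \<sigma> permutes {..<length (Js ! a)}}.
         \<Sum>\<tau>\<in>{\<tau>. \<tau> permutes {..<length I}}.
           of_int (sign \<tau>) *
           (if hd (permute_list \<sigma> (Js ! a)) = hd (permute_list \<tau> I)
            then X (tl (permute_list \<tau> I)) (Js[a := tl (permute_list \<sigma> (Js ! a))])
            else 0))
     else 0)"

end

theory Submission
  imports Defs
begin

definition shiftp :: "(nat \<Rightarrow> nat) \<Rightarrow> nat \<Rightarrow> nat" where
  "shiftp \<rho> = (\<lambda>i. if i = 0 then 0 else Suc (\<rho> (i - 1)))"

lemma shiftp_permutes: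
  assumes "\<rho> permutes {..<m}"
  shows "shiftp \<rho> permutes {..<Suc m}"
proof (rule bij_imp_permutes)
  have inj: "inj \<rho>" using assms permutes_inj by blast
  show "bij_betw (shiftp \<rho>) {..<Suc m} {..<Suc m}"
  proof (rule bij_betw_imageI)
    show "inj_on (shiftp \<rho>) {..<Suc m}"
    proof (rule inj_onI)
      fix x y assume "shiftp \<rho> x = shiftp \<rho> y"
      then show "x = y" unfolding shiftp_def using inj
        by (cases x; cases y) (auto simp: inj_eq)
    qed
    show "shiftp \<rho> ` {..<Suc m} = {..<Suc m}"
    proof
      show "shiftp \<rho> ` {..<Suc m} \<subseteq> {..<Suc m}"
      proof
        fix y assume "y \<in> shiftp \<rho> ` {..<Suc m}"
        then obtain x where x: "x < Suc m" "y = shiftp \<rho> x" by auto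
        show "y \<in> {..<Suc m}"
        proof (cases x)
          case 0 then show ?thesis using x by (simp add: shiftp_def)
        next
          case (Suc z)
          then have "z < m" using x by simp
          then have "\<rho> z < m" using permutes_in_image[OF assms] by simp
          then show ?thesis using x Suc by (simp add: shiftp_def)
        qed
      qed
      show "{..<Suc m} \<subseteq> shiftp \<rho> ` {..<Suc m}"
      proof
        fix y assume y: "y \<in> {..<Suc m}"
        show "y \<in> shiftp \<rho> ` {..<Suc m}"
        proof (cases y)
          case 0 then have "y = shiftp \<rho> 0" by (simp add: shiftp_def)
          then show ?thesis by blast
        next
          case (Suc z)
          then have "z \<in> {..<m}" using y by simp
          then have "z \<in> \<rho> ` {..<m}" using permutes_image[OF assms] by simp
          then obtain x where x: "x < m" "\<rho> x = z" by blast
          then have "y = shiftp \<rho> (Suc x)" using Suc by (simp add: shiftp_def)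
          moreover have "Suc x \<in> {..<Suc m}" using x by simp
          ultimately show ?thesis by blast
        qed
      qed
    qed
  qed
  show "\<And>x. x \<notin> {..<Suc m} \<Longrightarrow> shiftp \<rho> x = x"
  proof -
    fix x :: nat assume "x \<notin> {..<Suc m}"
    then have "x - 1 \<notin> {..<m}" "x \<noteq> 0" by auto
    then show "shiftp \<rho> x = x" using permutes_not_in[OF assms] by (simp add: shiftp_def)
  qed
qed

lemma shiftp_transpose:
  "shiftp (Transposition.transpose a b \<circ> p) = Transposition.transpose (Suc a) (Suc b) \<circ> shiftp p"
  by (rule ext) (simp add: shiftp_def Transposition.transpose_def)

lemma shiftp_id: "shiftp id = id"
  by (rule ext) (simp add: shiftp_def)

lemma sign_shiftp:
  assumes "\<rho> permutes {..<m}"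
  shows "sign (shiftp \<rho>) = sign \<rho>"
  using assms finite_lessThan
proof (induct rule: permutes_induct)
  case id then show ?case by (simp only: shiftp_id)
next
  case (swap a b p)
  have pp: "permutation p" using swap(5) permutes_imp_permutation by blast
  have pp': "permutation (shiftp p)" using shiftp_permutes[OF swap(5)] permutes_imp_permutation by blast
  have "sign (shiftp (Transposition.transpose a b \<circ> p)) = sign (Transposition.transpose (Suc a) (Suc b)) * sign (shiftp p)"
    unfolding shiftp_transpose by (rule sign_compose[OF permutation_swap_id pp'])
  also have "\<dots> = sign (Transposition.transpose a b) * sign p"
    using swap(3,4) by (simp add: sign_swap_id)
  also have "\<dots> = sign (Transposition.transpose a b \<circ> p)"
    by (rule sign_compose[OF permutation_swap_id pp, symmetric])
  finally show ?case .
qed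

lemma permute_list_shiftp:
  assumes "L \<noteq> []" "\<rho> permutes {..<length L - 1}"
  shows "permute_list (shiftp \<rho>) L = hd L # permute_list \<rho> (tl L)"
proof -
  obtain m where m: "length L = Suc m" using assms by (cases L) auto
  have "[0..<Suc m] = 0 # map Suc [0..<m]" by (simp add: upt_conv_Cons map_Suc_upt)
  then have "permute_list (shiftp \<rho>) L = L ! 0 # map (\<lambda>i. L ! Suc (\<rho> i)) [0..<m]"
    using m by (simp add: permute_list_def shiftp_def del: upt_Suc)
  also have "map (\<lambda>i. L ! Suc (\<rho> i)) [0..<m] = map (\<lambda>i. tl L ! (\<rho> i)) [0..<m]"
    using permutes_in_image[OF assms(2)] m by (intro map_cong refl) (simp add: nth_tl)
  also have "L ! 0 # map (\<lambda>i. tl L ! (\<rho> i)) [0..<m] = hd L # permute_list \<rho> (tl L)"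
    using assms m by (simp add: permute_list_def hd_conv_nth)
  finally show ?thesis .
qed


definition cnt :: "nat \<Rightarrow> nat list \<Rightarrow> real" where
  "cnt x M = (if M = [] then 0 else
     (\<Sum>\<sigma>\<in>{\<sigma>. \<sigma> permutes {..<length M}}. if M ! (\<sigma> 0) = x then 1 else 0) / fact (length M))"

lemma cnt_zero: "x \<notin> set M \<Longrightarrow> cnt x M = 0"
proof (cases "M = []")
  case False
  assume x: "x \<notin> set M"
  have "\<And>\<sigma>. \<sigma> permutes {..<length M} \<Longrightarrow> M ! (\<sigma> 0) \<noteq> x"
  proof -
    fix \<sigma> assume "\<sigma> permutes {..<length M}"
    then have "\<sigma> 0 < length M" using permutes_in_image False by fastforce
    then show "M ! (\<sigma> 0) \<noteq> x" using x nth_mem by metis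
  qed
  then show ?thesis unfolding cnt_def by simp
qed (simp add: cnt_def)

lemma cnt_pos: assumes "x \<in> set M" shows "cnt x M > 0"
proof -
  have ne: "M \<noteq> []" using assms by auto
  obtain i where i: "i < length M" "M ! i = x" using assms by (metis in_set_conv_nth)
  let ?t = "Transposition.transpose 0 i"
  have tp: "?t permutes {..<length M}" using i ne by (intro permutes_swap_id) auto
  have fin: "finite {\<sigma>. \<sigma> permutes {..<length M}}" by (simp add: finite_permutations)
  have "(1::real) \<le> (\<Sum>\<sigma>\<in>{\<sigma>. \<sigma> permutes {..<length M}}. if M ! (\<sigma> 0) = x then 1 else 0)"
  proof -
    have "(if M ! (?t 0) = x then 1 else 0) = (1::real)" using i by simp
    moreover have "(if M ! (?t 0) = x then 1 else 0) \<le> (\<Sum>\<sigma>\<in>{\<sigma>. \<sigma> permutes {..<length M}}. if M ! (\<sigma> 0) = x then 1 else (0::real))"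
      by (rule member_le_sum) (use tp fin in auto)
    ultimately show ?thesis by simp
  qed
  then show ?thesis unfolding cnt_def using ne by (simp add: divide_pos_pos)
qed

fun sub :: "nat list list \<Rightarrow> nat \<Rightarrow> nat list \<Rightarrow> nat list list" where
  "sub K j [] = K"
| "sub K j (x # L) = sub (K[j := remove1 x (K ! j)]) (Suc j) L"

definition meq :: "nat list list \<Rightarrow> nat list list \<Rightarrow> bool" where
  "meq K1 K2 \<longleftrightarrow> length K1 = length K2 \<and> (\<forall>a<length K1. mset (K1 ! a) = mset (K2 ! a))"

lemma meq_update: "meq K1 K2 \<Longrightarrow> (j < length K1 \<Longrightarrow> mset A = mset A') \<Longrightarrow> meq (K1[j := A]) (K2[j := A'])"
  unfolding meq_def by (metis length_list_update nth_list_update_eq nth_list_update_neq)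

lemma sub_meq: "meq K1 K2 \<Longrightarrow> meq (sub K1 j L) (sub K2 j L)"
proof (induction L arbitrary: K1 K2 j)
  case Nil then show ?case by simp
next
  case (Cons x L)
  have "j < length K1 \<Longrightarrow> mset (remove1 x (K1 ! j)) = mset (remove1 x (K2 ! j))"
    using Cons.prems by (simp add: meq_def)
  then have "meq (K1[j := remove1 x (K1 ! j)]) (K2[j := remove1 x (K2 ! j)])"
    using Cons.prems by (rule meq_update[rotated])
  then show ?case using Cons.IH by simp
qed

lemma length_sub: "length (sub K j L) = length K"
  by (induction L arbitrary: K j) auto

context
  fixes X :: arr
  assumes symX: "\<forall>I Js a p. a < length Js \<longrightarrow> p permutes {..<length (Js ! a)} \<longrightarrow>
         X I (Js[a := permute_list p (Js ! a)]) = X I Js"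
begin

lemma sym_meq_aux:
  "meq Js Js' \<Longrightarrow> (\<forall>a. d \<le> a \<longrightarrow> a < length Js \<longrightarrow> Js ! a = Js' ! a) \<Longrightarrow> X I Js = X I Js'"
proof (induction d arbitrary: Js')
  case 0
  then have "Js = Js'" by (intro nth_equalityI) (auto simp: meq_def)
  then show ?case by simp
next
  case (Suc d)
  show ?case
  proof (cases "d < length Js")
    case False
    then show ?thesis using Suc by (metis not_less_eq_eq le_trans not_le)
  next
    case True
    define Js'' where "Js'' = Js'[d := Js ! d]"
    have len: "length Js' = length Js" using Suc.prems by (simp add: meq_def)
    have m1: "meq Js Js''"
      unfolding meq_def
    proof (intro conjI allI impI)
      show "length Js = length Js''" using len by (simp add: Js''_def)
      fix a assume a: "a < length Js"
      show "mset (Js ! a) = mset (Js'' ! a)"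
      proof (cases "a = d")
        case True then show ?thesis using a len by (simp add: Js''_def)
      next
        case False then show ?thesis using a len Suc.prems(1) by (simp add: Js''_def meq_def)
      qed
    qed
    have "\<forall>a. d \<le> a \<longrightarrow> a < length Js \<longrightarrow> Js ! a = Js'' ! a"
      using Suc.prems(2) len unfolding Js''_def by (auto simp: nth_list_update)
    then have e1: "X I Js = X I Js''" using Suc.IH m1 by blast
    have "mset (Js' ! d) = mset (Js'' ! d)" using Suc.prems True len unfolding Js''_def meq_def by simp
    then obtain p where p: "p permutes {..<length (Js'' ! d)}" "permute_list p (Js'' ! d) = Js' ! d"
      by (metis mset_eq_permutation)
    have "Js''[d := permute_list p (Js'' ! d)] = Js'"
      using p(2) len unfolding Js''_def by simp
    moreover have "d < length Js''" using True len by (simp add: Js''_def)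
    ultimately have "X I Js' = X I Js''" using symX p(1) by metis
    then show ?thesis using e1 by simp
  qed
qed

lemma sym_meq: "meq Js Js' \<Longrightarrow> X I Js = X I Js'"
  by (rule sym_meq_aux[where d="length Js"]) auto

end


definition Gt :: "arr \<Rightarrow> nat \<Rightarrow> nat list list \<Rightarrow> nat list \<Rightarrow> real" where
  "Gt X j K L = (\<Prod>\<beta><length L. cnt (L ! \<beta>) (K ! (j + \<beta>))) * X [] (sub K j L)"

definition form :: "arr \<Rightarrow> nat \<Rightarrow> nat list \<Rightarrow> nat list list \<Rightarrow> real" where
  "form X j I K = (1 / fact (length I)) *
     (\<Sum>\<tau>\<in>{\<tau>. \<tau> permutes {..<length I}}. of_int (sign \<tau>) * Gt X j K (permute_list \<tau> I))"

definition Zs :: "nat \<Rightarrow> nat \<Rightarrow> nat \<Rightarrow> arr \<Rightarrow> arr" where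
  "Zs n q j X = foldr (\<lambda>a Y. B n a Y) [j..<q] X"

lemma Zs_Suc: "j < q \<Longrightarrow> Zs n q j X = B n j (Zs n q (Suc j) X)"
  by (simp add: Zs_def upt_conv_Cons)

lemma Zs_q: "Zs n q q X = X"
  by (simp add: Zs_def)

lemma Gt_Cons: "Gt X j K (x # L) = cnt x (K ! j) * Gt X (Suc j) (K[j := remove1 x (K ! j)]) L"
proof -
  have "(\<Prod>\<beta><length (x # L). cnt ((x # L) ! \<beta>) (K ! (j + \<beta>))) =
        cnt x (K ! j) * (\<Prod>\<beta><length L. cnt (L ! \<beta>) (K ! (j + Suc \<beta>)))"
    unfolding length_Cons by (subst prod.lessThan_Suc_shift) simp
  moreover have "(\<Prod>\<beta><length L. cnt (L ! \<beta>) (K[j := remove1 x (K ! j)] ! (Suc j + \<beta>))) =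
        (\<Prod>\<beta><length L. cnt (L ! \<beta>) (K ! (j + Suc \<beta>)))"
    by (intro prod.cong refl) simp
  ultimately show ?thesis unfolding Gt_def by simp
qed

context
  fixes X :: arr
  assumes symX: "\<forall>I Js a p. a < length Js \<longrightarrow> p permutes {..<length (Js ! a)} \<longrightarrow>
         X I (Js[a := permute_list p (Js ! a)]) = X I Js"
begin

lemma form_cong:
  assumes "j + length I \<le> length K1" "meq K1 K2" "\<forall>i. j \<le> i \<longrightarrow> i < length K1 \<longrightarrow> K1 ! i = K2 ! i"
  shows "form X j I K1 = form X j I K2"
proof -
  have "Gt X j K1 (permute_list \<tau> I) = Gt X j K2 (permute_list \<tau> I)" for \<tau>
  proof -
    have "(\<Prod>\<beta><length I. cnt (permute_list \<tau> I ! \<beta>) (K1 ! (j + \<beta>))) =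
          (\<Prod>\<beta><length I. cnt (permute_list \<tau> I ! \<beta>) (K2 ! (j + \<beta>)))"
      using assms(1,3) by (intro prod.cong refl) auto
    moreover have "X [] (sub K1 j (permute_list \<tau> I)) = X [] (sub K2 j (permute_list \<tau> I))"
      by (rule sym_meq[OF symX sub_meq[OF assms(2)]])
    ultimately show ?thesis unfolding Gt_def by simp
  qed
  then show ?thesis unfolding form_def by simp
qed

lemma set_tl_sub: "set (tl L) \<subseteq> set L"
  by (cases L) auto

lemma upd_sets: "\<forall>b<q. set (K ! b) \<subseteq> S \<Longrightarrow> set A \<subseteq> S \<Longrightarrow> \<forall>b<q. set (K[j := A] ! b) \<subseteq> S"
proof (intro allI impI)
  fix b assume "\<forall>b<q. set (K ! b) \<subseteq> S" "set A \<subseteq> S" "b < q"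
  then show "set (K[j := A] ! b) \<subseteq> S"
    by (cases "j < length K"; cases "b = j") (auto simp: nth_list_update list_update_beyond)
qed

lemma Zs_step:
  fixes n q j :: nat and I :: "nat list" and K :: "nat list list"
  assumes qn: "q \<le> n" and jq: "j < q"
    and IH: "\<forall>I K. length I = q - Suc j \<longrightarrow> set I \<subseteq> {1..n} \<longrightarrow> length K = q \<longrightarrow>
              (\<forall>b<q. set (K ! b) \<subseteq> {1..n}) \<longrightarrow> Zs n q (Suc j) X I K = form X (Suc j) I K"
    and I: "length I = q - j" "set I \<subseteq> {1..n}"
    and K: "length K = q" "\<forall>b<q. set (K ! b) \<subseteq> {1..n}"
  shows "Zs n q j X I K = form X j I K"
proof -
  define Z where "Z = Zs n q (Suc j) X"
  define k where "k = q - j"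
  define M where "M = K ! j"
  define m where "m = length M"
  have k1: "k \<ge> 1" using jq by (simp add: k_def)
  have lenI: "length I = k" using I by (simp add: k_def)
  have Zj: "Zs n q j X = B n j Z" using jq by (simp add: Zs_Suc Z_def)
  define PT where "PT = {\<tau>. \<tau> permutes {..<k}}"
  define PS where "PS = {\<sigma>. \<sigma> permutes {..<m}}"
  have finPT: "finite PT" by (simp add: PT_def finite_permutations)
  have finPS: "finite PS" by (simp add: PS_def finite_permutations)
  have permI: "permute_list \<tau> I \<noteq> []" for \<tau>
  proof -
    have "length (permute_list \<tau> I) = k" using lenI by simp
    then show ?thesis using k1 by (metis le_zero_eq list.size(3) one_neq_zero)
  qed
  have hdI: "hd (permute_list \<tau> I) = I ! (\<tau> 0)" if "\<tau> \<in> PT" for \<tau>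
    using that lenI k1 permI[of \<tau>] by (simp add: PT_def hd_conv_nth permute_list_nth)
  have setpI: "set (permute_list \<tau> I) = set I" if "\<tau> \<in> PT" for \<tau>
    using that lenI by (metis PT_def mem_Collect_eq mset_permute_list set_mset_mset)
  show ?thesis
  proof (cases "M = []")
    case True
    have "B n j Z I K = 0" using True by (simp add: B_def M_def)
    moreover have "form X j I K = 0"
    proof -
      have "Gt X j K (permute_list \<tau> I) = 0" for \<tau>
      proof -
        have "0 \<in> {..<length (permute_list \<tau> I)}" using lenI k1 by simp
        moreover have "cnt (permute_list \<tau> I ! 0) (K ! (j + 0)) = 0" using True by (simp add: M_def cnt_def)
        ultimately show ?thesis unfolding Gt_def by (metis (no_types, lifting) finite_lessThan mult_eq_0_iff prod_zero_iff)
      qed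
      then show ?thesis by (simp add: form_def)
    qed
    ultimately show ?thesis using Zj by simp
  next
    case False
    have guard: "I \<noteq> [] \<and> length I \<le> n \<and> set I \<subseteq> {1..n} \<and> j < length K \<and> K ! j \<noteq> [] \<and>
        (\<forall>b<length K. set (K ! b) \<subseteq> {1..n})"
      using False I K jq qn lenI k1 by (auto simp: M_def)
    define W where "W (\<tau>::nat\<Rightarrow>nat) = Z (tl (permute_list \<tau> I)) (K[j := remove1 (I ! (\<tau> 0)) M])" for \<tau>
    define ind where "ind (\<sigma>::nat\<Rightarrow>nat) (\<tau>::nat\<Rightarrow>nat) = (if M ! (\<sigma> 0) = I ! (\<tau> 0) then 1 else (0::real))" for \<sigma> \<tau>
    have B1: "B n j Z I K = (1 / fact m) * (1 / fact k) *
       (\<Sum>\<sigma>\<in>PS. \<Sum>\<tau>\<in>PT. of_int (sign \<tau>) *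
           (if hd (permute_list \<sigma> M) = hd (permute_list \<tau> I)
            then Z (tl (permute_list \<tau> I)) (K[j := tl (permute_list \<sigma> M)])
            else 0))"
      using guard lenI unfolding B_def PS_def PT_def m_def M_def by simp
    have stepA: "(if hd (permute_list \<sigma> M) = hd (permute_list \<tau> I)
            then Z (tl (permute_list \<tau> I)) (K[j := tl (permute_list \<sigma> M)])
            else 0) = ind \<sigma> \<tau> * W \<tau>" if s: "\<sigma> \<in> PS" and t: "\<tau> \<in> PT" for \<sigma> \<tau>
    proof -
      have neM: "permute_list \<sigma> M \<noteq> []" using False by (metis length_0_conv length_permute_list)
      have hdM: "hd (permute_list \<sigma> M) = M ! (\<sigma> 0)"
        using s False neM by (simp add: PS_def m_def hd_conv_nth permute_list_nth)
      show ?thesis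
      proof (cases "M ! (\<sigma> 0) = I ! (\<tau> 0)")
        case False then show ?thesis using hdM hdI[OF t] by (simp add: ind_def)
      next
        case True
        define x where "x = I ! (\<tau> 0)"
        define K1 where "K1 = K[j := tl (permute_list \<sigma> M)]"
        define K2 where "K2 = K[j := remove1 x M]"
        have pM: "permute_list \<sigma> M = x # tl (permute_list \<sigma> M)"
          using hd_Cons_tl[OF neM] hdM True unfolding x_def by simp
        have msM: "mset (permute_list \<sigma> M) = mset M" using s by (simp add: PS_def m_def)
        have ms: "mset (tl (permute_list \<sigma> M)) = mset (remove1 x M)"
        proof -
          have "mset M = add_mset x (mset (tl (permute_list \<sigma> M)))"
            using msM pM by (metis mset.simps(2))
          then show ?thesis by (simp add: mset_remove1)
        qed
        have setM: "set M \<subseteq> {1..n}" using K jq by (simp add: M_def)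
        have st1: "set (tl (permute_list \<sigma> M)) \<subseteq> {1..n}"
        proof -
          have "set (tl (permute_list \<sigma> M)) = set (remove1 x M)" using ms by (metis set_mset_mset)
          then show ?thesis using order.trans[OF set_remove1_subset setM] by simp
        qed
        have st2: "set (remove1 x M) \<subseteq> {1..n}" by (rule order.trans[OF set_remove1_subset setM])
        have Ktl: "length (tl (permute_list \<tau> I)) = q - Suc j" using lenI k_def by simp
        have Itl: "set (tl (permute_list \<tau> I)) \<subseteq> {1..n}"
          by (rule order.trans[OF set_tl_sub]) (subst setpI[OF t], rule I(2))
        have K1c: "\<forall>b<q. set (K1 ! b) \<subseteq> {1..n}" unfolding K1_def by (rule upd_sets[OF K(2) st1])
        have K2c: "\<forall>b<q. set (K2 ! b) \<subseteq> {1..n}" unfolding K2_def by (rule upd_sets[OF K(2) st2])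
        have "Z (tl (permute_list \<tau> I)) K1 = form X (Suc j) (tl (permute_list \<tau> I)) K1"
          using IH Ktl Itl K1c K by (simp add: Z_def K1_def)
        also have "\<dots> = form X (Suc j) (tl (permute_list \<tau> I)) K2"
        proof (rule form_cong)
          show "Suc j + length (tl (permute_list \<tau> I)) \<le> length K1" using Ktl K jq by (simp add: K1_def)
          show "meq K1 K2" unfolding K1_def K2_def by (rule meq_update) (auto simp: meq_def ms)
          show "\<forall>i. Suc j \<le> i \<longrightarrow> i < length K1 \<longrightarrow> K1 ! i = K2 ! i" by (simp add: K1_def K2_def)
        qed
        also have "\<dots> = Z (tl (permute_list \<tau> I)) K2"
          using IH Ktl Itl K2c K by (simp add: Z_def K2_def)
        finally show ?thesis using hdM hdI[OF t] True by (simp add: ind_def W_def K1_def K2_def x_def)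
      qed
    qed
    have cntI: "(1 / fact m) * (\<Sum>\<sigma>\<in>PS. ind \<sigma> \<tau>) = cnt (I ! (\<tau> 0)) M" for \<tau>
      using False by (simp add: cnt_def ind_def PS_def m_def)
    have B2: "B n j Z I K = (1 / fact k) * (\<Sum>\<tau>\<in>PT. of_int (sign \<tau>) * (cnt (I ! (\<tau> 0)) M * W \<tau>))"
    proof -
      have "B n j Z I K = (1 / fact m) * (1 / fact k) *
         (\<Sum>\<sigma>\<in>PS. \<Sum>\<tau>\<in>PT. of_int (sign \<tau>) * (ind \<sigma> \<tau> * W \<tau>))"
        unfolding B1 using stepA by (intro arg_cong2[where f="(*)"] refl sum.cong) auto
      also have "\<dots> = (1 / fact k) * (\<Sum>\<tau>\<in>PT. of_int (sign \<tau>) * (((1 / fact m) * (\<Sum>\<sigma>\<in>PS. ind \<sigma> \<tau>)) * W \<tau>))"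
        by (subst sum.swap) (simp add: sum_distrib_left sum_distrib_right mult_ac)
      also have "\<dots> = (1 / fact k) * (\<Sum>\<tau>\<in>PT. of_int (sign \<tau>) * (cnt (I ! (\<tau> 0)) M * W \<tau>))"
        by (simp only: cntI)
      finally show ?thesis .
    qed
    define PR where "PR = {\<rho>. \<rho> permutes {..<k - 1}}"
    have finPR: "finite PR" by (simp add: PR_def finite_permutations)
    have shP: "shiftp \<rho> permutes {..<k}" if "\<rho> \<in> PR" for \<rho>
      using shiftp_permutes[of \<rho> "k - 1"] that k1 by (simp add: PR_def)
    have stepC: "cnt (I ! (\<tau> 0)) M * W \<tau> = (1 / fact (k - 1)) *
        (\<Sum>\<rho>\<in>PR. of_int (sign \<rho>) * Gt X j K (permute_list (\<tau> \<circ> shiftp \<rho>) I))" if t: "\<tau> \<in> PT" for \<tau>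
    proof -
      define x where "x = I ! (\<tau> 0)"
      define K2 where "K2 = K[j := remove1 x M]"
      have st2: "set (remove1 x M) \<subseteq> {1..n}"
        using K jq order.trans[OF set_remove1_subset[of x M]] unfolding M_def by simp
      have Ktl: "length (tl (permute_list \<tau> I)) = q - Suc j" using lenI k_def by simp
      have Itl: "set (tl (permute_list \<tau> I)) \<subseteq> {1..n}"
        by (rule order.trans[OF set_tl_sub]) (subst setpI[OF t], rule I(2))
      have K2c: "\<forall>b<q. set (K2 ! b) \<subseteq> {1..n}" unfolding K2_def by (rule upd_sets[OF K(2) st2])
      have "W \<tau> = form X (Suc j) (tl (permute_list \<tau> I)) K2"
        using IH Ktl Itl K2c K by (simp add: Z_def K2_def W_def x_def)
      also have "\<dots> = (1 / fact (k - 1)) *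
        (\<Sum>\<rho>\<in>PR. of_int (sign \<rho>) * Gt X (Suc j) K2 (permute_list \<rho> (tl (permute_list \<tau> I))))"
        unfolding form_def PR_def using lenI by simp
      finally have Wf: "W \<tau> = \<dots>" .
      have eq: "cnt x M * Gt X (Suc j) K2 (permute_list \<rho> (tl (permute_list \<tau> I))) =
                Gt X j K (permute_list (\<tau> \<circ> shiftp \<rho>) I)" if r: "\<rho> \<in> PR" for \<rho>
      proof -
        have "permute_list (\<tau> \<circ> shiftp \<rho>) I = permute_list (shiftp \<rho>) (permute_list \<tau> I)"
          using shP[OF r] lenI by (simp add: permute_list_compose)
        also have "\<dots> = x # permute_list \<rho> (tl (permute_list \<tau> I))"
          using permute_list_shiftp[OF permI[of \<tau>], of \<rho>] r lenI hdI[OF t]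
          by (simp add: PR_def x_def)
        finally have "permute_list (\<tau> \<circ> shiftp \<rho>) I = x # permute_list \<rho> (tl (permute_list \<tau> I))" .
        then show ?thesis by (simp add: Gt_Cons K2_def M_def)
      qed
      show ?thesis unfolding Wf x_def[symmetric]
        by (simp add: sum_distrib_left mult_ac eq[symmetric])
    qed
    have signc: "of_int (sign \<tau>) * of_int (sign \<rho>) = (of_int (sign (\<tau> \<circ> shiftp \<rho>)) :: real)"
      if t: "\<tau> \<in> PT" and r: "\<rho> \<in> PR" for \<tau> \<rho>
    proof -
      have "permutation \<tau>" using t by (auto simp: PT_def intro: permutes_imp_permutation)
      moreover have "permutation (shiftp \<rho>)" using shP[OF r] by (auto intro: permutes_imp_permutation)
      moreover have "sign (shiftp \<rho>) = sign \<rho>" using r by (simp add: PR_def sign_shiftp)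
      ultimately show ?thesis by (simp add: sign_compose)
    qed
    define S where "S = (\<Sum>\<tau>\<in>PT. of_int (sign \<tau>) * Gt X j K (permute_list \<tau> I))"
    have inner: "(\<Sum>\<tau>\<in>PT. of_int (sign (\<tau> \<circ> shiftp \<rho>)) * Gt X j K (permute_list (\<tau> \<circ> shiftp \<rho>) I)) = S"
      if r: "\<rho> \<in> PR" for \<rho>
      unfolding S_def PT_def
      by (rule sum_permutations_compose_right[OF shP[OF r], symmetric])
    have "B n j Z I K = (1 / fact k) * (\<Sum>\<tau>\<in>PT. of_int (sign \<tau>) * ((1 / fact (k - 1)) *
        (\<Sum>\<rho>\<in>PR. of_int (sign \<rho>) * Gt X j K (permute_list (\<tau> \<circ> shiftp \<rho>) I))))"
      unfolding B2 using stepC by simp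
    also have "\<dots> = (1 / fact k) * (1 / fact (k - 1)) * (\<Sum>\<tau>\<in>PT. \<Sum>\<rho>\<in>PR.
        of_int (sign (\<tau> \<circ> shiftp \<rho>)) * Gt X j K (permute_list (\<tau> \<circ> shiftp \<rho>) I))"
    proof -
      have "(\<Sum>\<tau>\<in>PT. of_int (sign \<tau>) * ((1 / fact (k - 1)) *
        (\<Sum>\<rho>\<in>PR. of_int (sign \<rho>) * Gt X j K (permute_list (\<tau> \<circ> shiftp \<rho>) I)))) =
        (1 / fact (k - 1)) * (\<Sum>\<tau>\<in>PT. \<Sum>\<rho>\<in>PR.
        (of_int (sign \<tau>) * of_int (sign \<rho>)) * Gt X j K (permute_list (\<tau> \<circ> shiftp \<rho>) I))"
        by (simp add: sum_distrib_left mult_ac)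
      also have "\<dots> = (1 / fact (k - 1)) * (\<Sum>\<tau>\<in>PT. \<Sum>\<rho>\<in>PR.
        of_int (sign (\<tau> \<circ> shiftp \<rho>)) * Gt X j K (permute_list (\<tau> \<circ> shiftp \<rho>) I))"
        using signc by (intro arg_cong2[where f="(*)"] refl sum.cong) auto
      finally show ?thesis by simp
    qed
    also have "\<dots> = (1 / fact k) * (1 / fact (k - 1)) * (\<Sum>\<rho>\<in>PR. S)"
      using inner by (subst sum.swap) simp
    also have "\<dots> = (1 / fact k) * S"
    proof -
      have "card PR = fact (k - 1)" unfolding PR_def by (rule card_permutations) auto
      then show ?thesis by simp
    qed
    also have "\<dots> = form X j I K" unfolding form_def S_def PT_def using lenI by simp
    finally show ?thesis using Zj by simp
  qed
qed

end


lemma sum_list_remove1_nat: "x \<in> set xs \<Longrightarrow> sum_list xs = x + sum_list (remove1 x (xs :: nat list))"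
  by (induct xs) auto

lemma sub_nth: "b < length K \<Longrightarrow> sub K j L ! b = (if j \<le> b \<and> b < j + length L then remove1 (L ! (b - j)) (K ! b) else K ! b)"
proof (induction L arbitrary: K j)
  case Nil then show ?case by auto
next
  case (Cons x L)
  have "sub K j (x # L) ! b = sub (K[j := remove1 x (K ! j)]) (Suc j) L ! b" by simp
  also have "\<dots> = (if Suc j \<le> b \<and> b < Suc j + length L then remove1 (L ! (b - Suc j)) (K[j := remove1 x (K ! j)] ! b)
      else K[j := remove1 x (K ! j)] ! b)"
    using Cons by simp
  also have "\<dots> = (if j \<le> b \<and> b < j + length (x # L) then remove1 ((x # L) ! (b - j)) (K ! b) else K ! b)"
    using Cons.prems by (cases "b = j") (auto simp: nth_list_update nth_Cons' Suc_diff_Suc)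
  finally show ?case .
qed

lemma sum_list_le: "\<forall>x\<in>set xs. x \<le> n \<Longrightarrow> sum_list xs \<le> length xs * (n::nat)"
  by (induct xs) auto

context
  fixes X :: arr
  assumes symX: "\<forall>I Js a p. a < length Js \<longrightarrow> p permutes {..<length (Js ! a)} \<longrightarrow>
         X I (Js[a := permute_list p (Js ! a)]) = X I Js"
begin

lemma Zs_form:
  assumes qn: "q \<le> n"
  shows "j \<le> q \<Longrightarrow> length I = q - j \<Longrightarrow> set I \<subseteq> {1..n} \<Longrightarrow> length K = q \<Longrightarrow>
     (\<forall>b<q. set (K ! b) \<subseteq> {1..n}) \<Longrightarrow> Zs n q j X I K = form X j I K"
proof (induction "q - j" arbitrary: j I K)
  case 0
  then have jq: "j = q" and I0: "I = []" by auto
  have "form X j I K = X [] K" unfolding form_def Gt_def using I0 by simp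
  then show ?case using jq I0 Zs_q[of n q X] by simp
next
  case (Suc d)
  have jq: "j < q" using Suc.hyps(2) by simp
  have IH: "\<forall>I K. length I = q - Suc j \<longrightarrow> set I \<subseteq> {1..n} \<longrightarrow> length K = q \<longrightarrow>
              (\<forall>b<q. set (K ! b) \<subseteq> {1..n}) \<longrightarrow> Zs n q (Suc j) X I K = form X (Suc j) I K"
    using Suc.hyps(1)[of "Suc j"] Suc.hyps(2) jq by simp
  show ?case by (rule Zs_step[OF symX qn jq IH Suc.prems(2-5)])
qed

lemma final:
  fixes n q :: nat and r :: "nat list"
  assumes qn: "q \<le> n" and lr: "length r = q"
    and shape0: "\<forall>I Js. \<not> valid_shape n 0 r I Js \<longrightarrow> X I Js = 0"
    and Y0: "Zs n q 0 X = (\<lambda>_ _. 0)"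
  shows "X = (\<lambda>_ _. 0)"
proof -
  define phi where "phi J = (\<Sum>\<beta><q. Suc \<beta> * sum_list (J ! \<beta>))" for J :: "nat list list"
  define N where "N = (\<Sum>\<beta><q. Suc \<beta> * (r ! \<beta> * n))"
  define V where "V J \<longleftrightarrow> valid_shape n 0 r [] J" for J
  have V_iff: "V J \<longleftrightarrow> length J = q \<and> (\<forall>a<q. length (J ! a) = r ! a \<and> set (J ! a) \<subseteq> {1..n})" for J
    unfolding V_def valid_shape_def using lr by auto
  have phiN: "phi J \<le> N" if "V J" for J
    unfolding phi_def N_def
  proof (rule sum_mono)
    fix \<beta> assume b: "\<beta> \<in> {..<q}"
    have "set (J ! \<beta>) \<subseteq> {1..n}" using that b by (simp add: V_iff)
    then have "\<forall>x\<in>set (J ! \<beta>). x \<le> n" by auto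
    then have "sum_list (J ! \<beta>) \<le> length (J ! \<beta>) * n" by (rule sum_list_le)
    moreover have "length (J ! \<beta>) = r ! \<beta>" using that b by (simp add: V_iff)
    ultimately show "Suc \<beta> * sum_list (J ! \<beta>) \<le> Suc \<beta> * (r ! \<beta> * n)"
      by (intro mult_le_mono2) simp
  qed
  define I0 where "I0 = map Suc [0..<q]"
  define PT where "PT = {\<tau>. \<tau> permutes {..<q}}"
  have finPT: "finite PT" by (simp add: PT_def finite_permutations)
  have lenI0: "length I0 = q" by (simp add: I0_def)
  have permI0: "permute_list \<tau> I0 = map (\<lambda>i. Suc (\<tau> i)) [0..<q]" if "\<tau> \<in> PT" for \<tau>
    using that permutes_in_image[of \<tau> "{..<q}"] unfolding PT_def I0_def permute_list_def by simp
  have mainJ: "X [] J = 0" if "V J" for J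
  proof (induction J rule: measure_induct_rule[where f="\<lambda>J. N - phi J"])
    case (less J)
    show ?case
    proof (cases "V J")
      case False then show ?thesis using shape0 by (simp add: V_def)
    next
      case True
      note VJ = True[unfolded V_iff]
      define K where "K = map (\<lambda>\<beta>. Suc \<beta> # J ! \<beta>) [0..<q]"
      have lenK: "length K = q" by (simp add: K_def)
      have Kb: "K ! \<beta> = Suc \<beta> # J ! \<beta>" if "\<beta> < q" for \<beta> using that by (simp add: K_def)
      have Kset: "\<forall>b<q. set (K ! b) \<subseteq> {1..n}" using VJ qn by (auto simp: Kb)
      have I0set: "set I0 \<subseteq> {1..n}" using qn by (auto simp: I0_def)
      have "0 = Zs n q 0 X I0 K" using Y0 by simp
      also have "\<dots> = form X 0 I0 K"
        by (rule Zs_form[OF qn]) (use lenI0 I0set lenK Kset in auto)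
      finally have F0: "form X 0 I0 K = 0" by simp
      have subnth: "sub K 0 L ! \<beta> = remove1 (L ! \<beta>) (Suc \<beta> # J ! \<beta>)" if "length L = q" "\<beta> < q" for L \<beta>
        using that by (simp add: sub_nth lenK Kb)
      have lensub: "length (sub K 0 L) = q" for L by (simp add: length_sub lenK)
      have other: "Gt X 0 K (permute_list \<tau> I0) = 0" if t: "\<tau> \<in> PT" "\<tau> \<noteq> id" for \<tau>
      proof (cases "\<forall>\<beta><q. Suc (\<tau> \<beta>) \<in> set (K ! \<beta>)")
        case False
        then obtain \<beta> where b: "\<beta> < q" "Suc (\<tau> \<beta>) \<notin> set (K ! \<beta>)" by blast
        have "cnt (permute_list \<tau> I0 ! \<beta>) (K ! (0 + \<beta>)) = 0"
          using b permI0[OF t(1)] by (simp add: cnt_zero)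
        moreover have "\<beta> \<in> {..<length (permute_list \<tau> I0)}" using b lenI0 by simp
        ultimately show ?thesis unfolding Gt_def
          by (metis (no_types, lifting) finite_lessThan mult_eq_0_iff prod_zero_iff)
      next
        case True
        define J' where "J' = sub K 0 (permute_list \<tau> I0)"
        have J'b: "J' ! \<beta> = remove1 (Suc (\<tau> \<beta>)) (Suc \<beta> # J ! \<beta>)" if "\<beta> < q" for \<beta>
          using subnth[of "permute_list \<tau> I0" \<beta>] that lenI0 permI0[OF t(1)] by (simp add: J'_def)
        have inb: "Suc (\<tau> \<beta>) \<in> set (Suc \<beta> # J ! \<beta>)" if "\<beta> < q" for \<beta>
          using True that Kb by simp
        have VJ': "V J'"
          unfolding V_iff
        proof (intro conjI allI impI)
          show "length J' = q" by (simp add: J'_def lensub)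
          fix a assume a: "a < q"
          have "length (remove1 (Suc (\<tau> a)) (Suc a # J ! a)) = length (Suc a # J ! a) - 1"
            using inb[OF a] by (simp only: length_remove1 if_True)
          then show "length (J' ! a) = r ! a" using a VJ by (simp add: J'b)
          have "set (J' ! a) \<subseteq> set (Suc a # J ! a)" unfolding J'b[OF a] by (rule set_remove1_subset)
          moreover have "set (Suc a # J ! a) \<subseteq> {1..n}" using a VJ qn by auto
          ultimately show "set (J' ! a) \<subseteq> {1..n}" by blast
        qed
        have rowsum: "sum_list (J' ! \<beta>) + Suc (\<tau> \<beta>) = Suc \<beta> + sum_list (J ! \<beta>)" if "\<beta> < q" for \<beta>
          using sum_list_remove1_nat[OF inb[OF that]] that by (simp add: J'b)
        define A where "A = (\<Sum>\<beta><q. Suc \<beta> * Suc (\<tau> \<beta>))"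
        define Q where "Q = (\<Sum>\<beta><q. Suc \<beta> * Suc \<beta>)"
        have phieq: "phi J' + A = Q + phi J"
        proof -
          have "phi J' + A = (\<Sum>\<beta><q. Suc \<beta> * (sum_list (J' ! \<beta>) + Suc (\<tau> \<beta>)))"
            unfolding phi_def A_def sum.distrib[symmetric] add_mult_distrib2 ..
          also have "\<dots> = (\<Sum>\<beta><q. Suc \<beta> * (Suc \<beta> + sum_list (J ! \<beta>)))"
            using rowsum by (intro sum.cong refl) simp
          also have "\<dots> = Q + phi J" unfolding phi_def Q_def sum.distrib[symmetric] add_mult_distrib2 ..
          finally show ?thesis .
        qed
        have AQ: "A < Q"
        proof -
          have tp: "\<tau> permutes {..<q}" using t by (simp add: PT_def)
          obtain \<gamma> where g: "\<gamma> < q" "\<tau> \<gamma> \<noteq> \<gamma>"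
          proof -
            have "\<exists>\<gamma><q. \<tau> \<gamma> \<noteq> \<gamma>"
            proof (rule ccontr)
              assume "\<not> ?thesis"
              then have "\<tau> x = x" for x using permutes_not_in[OF tp, of x] by (cases "x < q") auto
              then have "\<tau> = id" by (simp add: fun_eq_iff)
              then show False using t by simp
            qed
            then show ?thesis using that by blast
          qed
          have Q': "(\<Sum>\<beta><q. int (Suc (\<tau> \<beta>)) * int (Suc (\<tau> \<beta>))) = (\<Sum>\<beta><q. int (Suc \<beta>) * int (Suc \<beta>))"
            using sum.permute[OF tp, of "\<lambda>\<beta>. int (Suc \<beta>) * int (Suc \<beta>)"] by (simp add: comp_def)
          have pos: "0 < (\<Sum>\<beta><q. (int \<beta> - int (\<tau> \<beta>))^2)"
          proof -
            have "0 < (int \<gamma> - int (\<tau> \<gamma>))^2" using g by simp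
            also have "\<dots> \<le> (\<Sum>\<beta><q. (int \<beta> - int (\<tau> \<beta>))^2)"
              using g by (intro member_le_sum) auto
            finally show ?thesis .
          qed
          have expand: "(\<Sum>\<beta><q. (int \<beta> - int (\<tau> \<beta>))^2) =
              (\<Sum>\<beta><q. int (Suc \<beta>) * int (Suc \<beta>)) - 2 * (\<Sum>\<beta><q. int (Suc \<beta>) * int (Suc (\<tau> \<beta>)))
              + (\<Sum>\<beta><q. int (Suc (\<tau> \<beta>)) * int (Suc (\<tau> \<beta>)))"
            by (simp add: sum.distrib sum_subtractf sum_distrib_left power2_eq_square algebra_simps)
          have "int A = (\<Sum>\<beta><q. int (Suc \<beta>) * int (Suc (\<tau> \<beta>)))" by (simp only: A_def of_nat_sum of_nat_mult)
          moreover have "int Q = (\<Sum>\<beta><q. int (Suc \<beta>) * int (Suc \<beta>))" by (simp only: Q_def of_nat_sum of_nat_mult)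
          ultimately have "int A < int Q" using pos expand Q' by linarith
          then show ?thesis by simp
        qed
        have "phi J < phi J'" using phieq AQ by linarith
        moreover have "phi J' \<le> N" using phiN[OF VJ'] .
        ultimately have "N - phi J' < N - phi J" by linarith
        then have "X [] J' = 0" using less VJ' by blast
        then show ?thesis unfolding Gt_def J'_def by simp
      qed
      have idt: "id \<in> PT" by (simp add: PT_def permutes_id)
      have "form X 0 I0 K = (1 / fact q) * (of_int (sign (id :: nat \<Rightarrow> nat)) * Gt X 0 K (permute_list id I0))"
      proof -
        have "(\<Sum>\<tau>\<in>PT. of_int (sign \<tau>) * Gt X 0 K (permute_list \<tau> I0)) =
            of_int (sign (id :: nat \<Rightarrow> nat)) * Gt X 0 K (permute_list id I0) +
            (\<Sum>\<tau>\<in>PT - {id}. of_int (sign \<tau>) * Gt X 0 K (permute_list \<tau> I0))"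
          by (rule sum.remove[OF finPT idt])
        also have "(\<Sum>\<tau>\<in>PT - {id}. of_int (sign \<tau>) * Gt X 0 K (permute_list \<tau> I0)) = 0"
          using other by (intro sum.neutral) auto
        finally show ?thesis unfolding form_def PT_def using lenI0 by simp
      qed
      also have "\<dots> = (1 / fact q) * ((\<Prod>\<beta><q. cnt (I0 ! \<beta>) (K ! \<beta>)) * X [] J)"
      proof -
        have "sub K 0 I0 = J"
        proof (rule nth_equalityI)
          show "length (sub K 0 I0) = length J" using lensub VJ by simp
          fix b assume "b < length (sub K 0 I0)"
          then have b: "b < q" using lensub by simp
          show "sub K 0 I0 ! b = J ! b" using subnth[OF lenI0 b] b by (simp add: I0_def)
        qed
        then show ?thesis unfolding Gt_def using lenI0 by simp
      qed
      finally have e: "(1 / fact q) * ((\<Prod>\<beta><q. cnt (I0 ! \<beta>) (K ! \<beta>)) * X [] J) = 0" using F0 by simp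
      have Ppos: "(\<Prod>\<beta><q. cnt (I0 ! \<beta>) (K ! \<beta>)) > 0"
        by (rule prod_pos) (auto simp: I0_def Kb intro!: cnt_pos)
      have cpos: "(1 / fact q) * (\<Prod>\<beta><q. cnt (I0 ! \<beta>) (K ! \<beta>)) > (0::real)"
        by (rule mult_pos_pos) (simp, rule Ppos)
      have "((1 / fact q) * (\<Prod>\<beta><q. cnt (I0 ! \<beta>) (K ! \<beta>))) * X [] J = 0"
        using e by (simp only: mult.assoc)
      then show ?thesis using cpos by (metis less_irrefl mult_eq_0_iff)
    qed
  qed
  show ?thesis
  proof (intro ext)
    fix I Js
    show "X I Js = 0"
    proof (cases "valid_shape n 0 r I Js")
      case False then show ?thesis using shape0 by simp
    next
      case True
      then have "I = []" by (simp add: valid_shape_def)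
      then show ?thesis using mainJ True by (simp add: V_def)
    qed
  qed
qed

end

theorem mainTheorem1:
  fixes n q :: nat and r :: "nat list" and X :: arr
  assumes "n \<ge> 2" and "2 \<le> q" and "q \<le> n" and "length r = q"
    and "inH n 0 r X"
    and "foldr (\<lambda>a Y. B n a Y) [0..<q] X = (\<lambda>_ _. 0)"
  shows "X = (\<lambda>_ _. 0)"
proof -
  have symX: "\<forall>I Js a p. a < length Js \<longrightarrow> p permutes {..<length (Js ! a)} \<longrightarrow>
         X I (Js[a := permute_list p (Js ! a)]) = X I Js"
    using assms(5) by (simp add: inH_def)
  have shape0: "\<forall>I Js. \<not> valid_shape n 0 r I Js \<longrightarrow> X I Js = 0"
    using assms(5) by (simp add: inH_def)
  have "Zs n q 0 X = (\<lambda>_ _. 0)" using assms(6) by (simp add: Zs_def)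
  then show ?thesis by (rule final[OF symX assms(3,4) shape0])
qed

end
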